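(* Let $\alpha_1,\dots,\alpha_n\in\Gamma$ be linearly independent over $\mathbb{R}$. Let $A$ be the $n\times n$ matrix of $1$-forms defined in the context, fix $i\neq j$ in $\{1,\dots,n\}$, and fix an integer $p\ge3$. Suppose that either $\operatorname{len}(\alpha_j-\alpha_i)\ge p$, or both of the following hold: (Q) for all $k\notin\{i,j\}$, $$\langle\alpha_j,\alpha_i\rangle\langle\alpha_j-\alpha_k,\alpha_k-\alpha_i\rangle=\langle\alpha_j,\alpha_k\rangle\langle\alpha_k,\alpha_i\rangle;$$ (V) for every ordered pair $(\beta,\gamma)$ of nonzero elements of $\Gamma$ with $\beta+\gamma=\alpha_j-\alpha_i$ that is not of the form $(\alpha_j-\alpha_k,\alpha_k-\alpha_i)$ or $(\alpha_k-\alpha_i,\alpha_j-\alpha_k)$ for some $k\notin\{i,j\}$, one has $\langle\beta,\gamma\rangle f^\beta f^\gamma\in(\mathbf{s})^p$. Then the $(j,i)$ entry of the curvature matrix $F=dA+A\wedge A$ lies in $(\mathbf{s})^p$, i.e. it vanishes modulo terms of order at least $p$ in $\mathbf{s}$.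
   Context: Let $\Gamma\cong\mathbb{Z}^n$ be a lattice with basis $[S_1],\dots,[S_n]$, and let $\langle-,-\rangle:\Gamma\times\Gamma\to\mathbb{Z}$ be a skew-symmetric bilinear form. For $\alpha=\sum_i a_i[S_i]$ set $\operatorname{len}(\alpha)=\sum_i|a_i|$. Let $U\subset\operatorname{Hom}(\Gamma,\mathbb{C})$ be a connected open set; for $\alpha\in\Gamma$, $Z(\alpha)$ is a linear holomorphic function on $U$. Let $\mathbf{s}=(s_1,\dots,s_n)$ be formal variables, and let $R$ be the ring of formal power series in $\mathbf{s}$ with coefficients holomorphic on $U$. Differential forms with coefficients in $R$ are power series in $\mathbf{s}$ whose coefficients are holomorphic forms, and $d$ acts coefficientwise. $(\mathbf{s})^p$ denotes the series (or forms) all of whose monomials have total degree at least $p$. Let $\{f^\alpha\}_{\alpha\in\Gamma\setminus\{0\}}\subset R$ satisfy: (i) $f^\alpha\in(\mathbf{s})^{\operatorname{len}(\alpha)}$; (ii) if $f^\alpha\neq0$ then $Z(\alpha)$ is nowhere zero on $U$; (iii) the Joyce PDE $$df^\alpha=-\sum_{\beta+\gamma=\alpha,\ \beta,\gamma\neq0}(-1)^{\langle\beta,\gamma\rangle}\langle\beta,\gamma\rangle f^\beta f^\gamma\, d\log Z(\beta)$$ holds. Here the sum is over ordered pairs and is $\mathbf{s}$-adically convergent by (i). Given $\alpha_1,\dots,\alpha_n$, define the $n\times n$ matrix of $1$-forms $A$ by $A_{kk}=0$ and, for $k\neq l$, $$A_{kl}=(-1)^{\langle\alpha_k,\alpha_l\rangle}\langle\alpha_k,\alpha_l\rangle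 f^{\alpha_k-\alpha_l}\,d\log Z(\alpha_k-\alpha_l),$$ with $A_{kl}=0$ when $f^{\alpha_k-\alpha_l}=0$. *)

theory Defs
  imports "HOL-Analysis.Analysis"
begin

text \<open>The lattice Gamma = Z^n is int^'n (basis [S_l] = axis vectors), so
  CARD('n) = n.  Hom(Gamma,C) is identified with complex^'n via u = (u([S_l]))_l.
  The formal variables s_l are indexed by 'n; a monomial is an exponent vector 'n => nat.
  An element of R (power series in s with coefficients holomorphic on U) is a map
  monomial => (complex^'n => complex); only values on U matter.
  A 1-form  sum_l w_l du_l  (series-valued) is stored by its coefficients w m l;
  a 2-form is stored by its antisymmetric coefficient matrix w m k l
  (i.e. the form (1/2) sum_{k,l} w_{kl} du_k wedge du_l).\<close>

type_synonym 'n mono = "'n \<Rightarrow> nat"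
type_synonym 'n ser = "'n mono \<Rightarrow> complex^'n \<Rightarrow> complex"
type_synonym 'n form1 = "'n mono \<Rightarrow> 'n \<Rightarrow> complex^'n \<Rightarrow> complex"
type_synonym 'n form2 = "'n mono \<Rightarrow> 'n \<Rightarrow> 'n \<Rightarrow> complex^'n \<Rightarrow> complex"

definition skew_bilinear :: "(int^'n \<Rightarrow> int^'n \<Rightarrow> int) \<Rightarrow> bool" where
  "skew_bilinear bf \<longleftrightarrow>
     (\<forall>a b c. bf (a + b) c = bf a c + bf b c) \<and>
     (\<forall>a b c. bf a (b + c) = bf a b + bf a c) \<and>
     (\<forall>a b. bf a b = - bf b a)"

definition mdeg :: "('n::finite) mono \<Rightarrow> nat" where
  "mdeg m = (\<Sum>l\<in>UNIV. m l)"

definition lenG :: "int^('n::finite) \<Rightarrow> nat" where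
  "lenG a = nat (\<Sum>l\<in>UNIV. \<bar>a$l\<bar>)"

definition Zc :: "int^('n::finite) \<Rightarrow> complex^'n \<Rightarrow> complex" where
  "Zc a u = (\<Sum>l\<in>UNIV. of_int (a$l) * u$l)"

definition dlogZ :: "int^('n::finite) \<Rightarrow> 'n \<Rightarrow> complex^'n \<Rightarrow> complex" where
  "dlogZ a k u = of_int (a$k) / Zc a u"

definition holo_on :: "(complex^('n::finite)) set \<Rightarrow> (complex^'n \<Rightarrow> complex) \<Rightarrow> bool" where
  "holo_on U g \<longleftrightarrow> (\<forall>x\<in>U. \<exists>D. (g has_derivative D) (at x) \<and>
                        (\<forall>c v. D (\<chi> l. c * v$l) = c * D v))"

definition cpartial :: "'n \<Rightarrow> (complex^('n::finite) \<Rightarrow> complex) \<Rightarrow> complex^'n \<Rightarrow> complex" where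
  "cpartial k g x = deriv (\<lambda>z. g (\<chi> l. if l = k then z else x$l)) (x$k)"

definition ser_mult :: "('n::finite) ser \<Rightarrow> 'n ser \<Rightarrow> 'n ser" where
  "ser_mult f g m x = (\<Sum>m1\<in>{m1. \<forall>r. m1 r \<le> m r}. f m1 x * g (\<lambda>r. m r - m1 r) x)"

definition in_sp :: "(complex^('n::finite)) set \<Rightarrow> nat \<Rightarrow> 'n ser \<Rightarrow> bool" where
  "in_sp U p g \<longleftrightarrow> (\<forall>m. mdeg m < p \<longrightarrow> (\<forall>x\<in>U. g m x = 0))"

definition in_sp2 :: "(complex^('n::finite)) set \<Rightarrow> nat \<Rightarrow> 'n form2 \<Rightarrow> bool" where
  "in_sp2 U p w \<longleftrightarrow> (\<forall>m k l. mdeg m < p \<longrightarrow> (\<forall>x\<in>U. w m k l x = 0))"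

definition ser_nonzero :: "(complex^('n::finite)) set \<Rightarrow> 'n ser \<Rightarrow> bool" where
  "ser_nonzero U g \<longleftrightarrow> (\<exists>m. \<exists>x\<in>U. g m x \<noteq> 0)"

definition ext_d :: "('n::finite) form1 \<Rightarrow> 'n form2" where
  "ext_d w m k l x = cpartial k (w m l) x - cpartial l (w m k) x"

definition wedge :: "('n::finite) form1 \<Rightarrow> 'n form1 \<Rightarrow> 'n form2" where
  "wedge a b m k l x = (\<Sum>m1\<in>{m1. \<forall>r. m1 r \<le> m r}.
      a m1 k x * b (\<lambda>r. m r - m1 r) l x - a m1 l x * b (\<lambda>r. m r - m1 r) k x)"

definition sgnpow :: "int \<Rightarrow> complex" where
  "sgnpow z = (-1::complex) powi z"

definition joyce_pde :: "(int^('n::finite) \<Rightarrow> int^'n \<Rightarrow> int) \<Rightarrow> (complex^'n) set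
     \<Rightarrow> (int^'n \<Rightarrow> 'n ser) \<Rightarrow> bool" where
  "joyce_pde bf U f \<longleftrightarrow>
     (\<forall>a. a \<noteq> 0 \<longrightarrow> (\<forall>m. \<forall>x\<in>U. \<forall>k.
        cpartial k (f a m) x =
          - (\<Sum>\<^sub>\<infinity>b\<in>{b. b \<noteq> 0 \<and> a - b \<noteq> 0}.
               sgnpow (bf b (a - b)) * of_int (bf b (a - b))
               * ser_mult (f b) (f (a - b)) m x * dlogZ b k x)))"

definition lin_indep_R :: "('n::finite \<Rightarrow> int^'n) \<Rightarrow> bool" where
  "lin_indep_R \<alpha> \<longleftrightarrow>
     (\<forall>c::'n \<Rightarrow> real. (\<Sum>k\<in>UNIV. c k *\<^sub>R (\<chi> l. real_of_int (\<alpha> k $ l))) = 0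
        \<longrightarrow> (\<forall>k. c k = 0))"

definition Amat :: "(int^('n::finite) \<Rightarrow> int^'n \<Rightarrow> int) \<Rightarrow> (complex^'n) set
     \<Rightarrow> (int^'n \<Rightarrow> 'n ser) \<Rightarrow> ('n \<Rightarrow> int^'n) \<Rightarrow> 'n \<Rightarrow> 'n \<Rightarrow> 'n form1" where
  "Amat bf U f \<alpha> k l = (\<lambda>m r x.
     if k = l \<or> \<not> ser_nonzero U (f (\<alpha> k - \<alpha> l)) then 0
     else sgnpow (bf (\<alpha> k) (\<alpha> l)) * of_int (bf (\<alpha> k) (\<alpha> l))
          * f (\<alpha> k - \<alpha> l) m x * dlogZ (\<alpha> k - \<alpha> l) r x)"

definition curv :: "(int^('n::finite) \<Rightarrow> int^'n \<Rightarrow> int) \<Rightarrow> (complex^'n) set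
     \<Rightarrow> (int^'n \<Rightarrow> 'n ser) \<Rightarrow> ('n \<Rightarrow> int^'n) \<Rightarrow> 'n \<Rightarrow> 'n \<Rightarrow> 'n form2" where
  "curv bf U f \<alpha> k l = (\<lambda>m r s x.
     ext_d (Amat bf U f \<alpha> k l) m r s x
     + (\<Sum>q\<in>UNIV. wedge (Amat bf U f \<alpha> k q) (Amat bf U f \<alpha> q l) m r s x))"

end

theory Submission
  imports Defs
begin


definition Lh :: "'n::finite \<Rightarrow> complex \<Rightarrow> complex^'n" where
  "Lh r h = (\<chi> l. if l = r then h else 0)"

lemma Lh_bl: "bounded_linear (Lh r)"
proof -
  have "linear (Lh r)"
    by (rule linearI) (auto simp: Lh_def vec_eq_iff)
  then show ?thesis using linear_conv_bounded_linear by blast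
qed

lemma line_eq: "(\<chi> l. if l = r then z else x$l) = (x - Lh r (x$r)) + Lh r z"
  by (auto simp: Lh_def vec_eq_iff)

lemma line_has_derivative:
  "((\<lambda>z. (\<chi> l. if l = r then z else x$l)::complex^'n::finite) has_derivative Lh r) (at z0)"
proof -
  have "((\<lambda>z. (x - Lh r (x$r)) + Lh r z) has_derivative (\<lambda>h. 0 + Lh r h)) (at z0)"
    by (intro derivative_intros bounded_linear_imp_has_derivative Lh_bl)
  then show ?thesis by (simp add: line_eq)
qed

lemma holo_line:
  fixes g :: "complex^'n::finite \<Rightarrow> complex"
  assumes "holo_on U g" "x \<in> U"
  shows "((\<lambda>z. g (\<chi> l. if l = r then z else x$l)) has_field_derivative cpartial r g x) (at (x$r))"
proof -
  obtain D where D: "(g has_derivative D) (at x)" "\<And>c v. D (\<chi> l. c * v$l) = c * D v"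
    using assms unfolding holo_on_def by blast
  have xe: "(\<chi> l. if l = r then x$r else x$l) = x" by (simp add: vec_eq_iff)
  have "((g \<circ> (\<lambda>z. (\<chi> l. if l = r then z else x$l))) has_derivative (D \<circ> Lh r)) (at (x$r))"
    by (rule diff_chain_at[OF line_has_derivative]) (simp add: xe D(1))
  moreover have "D \<circ> Lh r = (*) (D (axis r 1))"
  proof
    fix h
    have "Lh r h = (\<chi> l. h * (axis r 1 :: complex^'n)$l)"
      by (simp add: Lh_def vec_eq_iff axis_def)
    then show "(D \<circ> Lh r) h = (*) (D (axis r 1)) h" by (simp add: D(2) mult.commute)
  qed
  ultimately have H: "((\<lambda>z. g (\<chi> l. if l = r then z else x$l)) has_field_derivative D (axis r 1)) (at (x$r))"
    by (simp add: has_field_derivative_def comp_def)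
  then have "cpartial r g x = D (axis r 1)" unfolding cpartial_def by (rule DERIV_imp_deriv)
  with H show ?thesis by simp
qed


lemma Zc_line_deriv:
  "((\<lambda>z. Zc a (\<chi> l. if l = r then z else x$l)) has_field_derivative of_int (a$r)) (at w)"
proof -
  have "((\<lambda>z. \<Sum>l\<in>UNIV. of_int (a$l) * (if l = r then z else x$l)) has_field_derivative
         (\<Sum>l\<in>UNIV. if l = r then of_int (a$l) else 0)) (at w)"
    by (intro DERIV_sum) (auto intro!: derivative_eq_intros)
  then show ?thesis by (simp add: Zc_def)
qed

lemma Zc_line_at: "Zc a (\<chi> l. if l = r then x$r else x$l) = Zc a x"
proof -
  have "(\<chi> l. if l = r then x$r else x$l) = x" by (simp add: vec_eq_iff)
  then show ?thesis by simp
qed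

lemma dlogZ_line:
  assumes "Zc a x \<noteq> 0"
  shows "((\<lambda>z. dlogZ a s (\<chi> l. if l = r then z else x$l)) has_field_derivative
      - (of_int (a$s) * of_int (a$r) / (Zc a x)^2)) (at (x$r))"
proof -
  have "((\<lambda>z. of_int (a$s) / Zc a (\<chi> l. if l = r then z else x$l)) has_field_derivative
      - (of_int (a$s) * of_int (a$r)) / (Zc a (\<chi> l. if l = r then x$r else x$l) * Zc a (\<chi> l. if l = r then x$r else x$l))) (at (x$r))"
    by (rule derivative_eq_intros Zc_line_deriv | simp add: Zc_line_at assms)+
  then show ?thesis by (simp add: dlogZ_def Zc_line_at power2_eq_square)
qed

lemma cpartial_prod:
  fixes F :: "complex^'n::finite \<Rightarrow> complex"
  assumes "holo_on U F" "x \<in> U" "Zc a x \<noteq> 0"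
  shows "cpartial r (\<lambda>y. c * F y * dlogZ a s y) x =
    c * cpartial r F x * dlogZ a s x + c * F x * (- (of_int (a$s) * of_int (a$r) / (Zc a x)^2))"
proof -
  have xe: "(\<chi> l. if l = r then x$r else x$l) = x" by (simp add: vec_eq_iff)
  have "((\<lambda>z. c * F (\<chi> l. if l = r then z else x$l) * dlogZ a s (\<chi> l. if l = r then z else x$l))
     has_field_derivative (c * cpartial r F x * dlogZ a s x + c * F x * (- (of_int (a$s) * of_int (a$r) / (Zc a x)^2)))) (at (x$r))"
    using DERIV_mult[OF DERIV_cmult[OF holo_line[OF assms(1,2)], of c r] dlogZ_line[OF assms(3), of s r]]
    by (simp add: xe) (simp add: algebra_simps)
  then show ?thesis unfolding cpartial_def by (rule DERIV_imp_deriv)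
qed

lemma cpartial_zero:
  fixes g :: "complex^'n::finite \<Rightarrow> complex"
  assumes "open U" "x \<in> U" "\<And>y. y \<in> U \<Longrightarrow> g y = 0"
  shows "cpartial r g x = 0"
proof -
  have xe: "(\<chi> l. if l = r then x$r else x$l) = x" by (simp add: vec_eq_iff)
  have c: "continuous (at (x$r)) (\<lambda>z. (\<chi> l. if l = r then z else x$l)::complex^'n)"
    using line_has_derivative has_derivative_continuous by blast
  have "open ((\<lambda>z. (\<chi> l. if l = r then z else x$l)::complex^'n) -` U)"
    using line_has_derivative has_derivative_continuous assms(1)
    by (intro continuous_open_vimage) blast+
  then have "eventually (\<lambda>z. (\<chi> l. if l = r then z else x$l) \<in> U) (nhds (x$r))"
    unfolding eventually_nhds using xe assms(2) by (intro exI[of _ "((\<lambda>z. (\<chi> l. if l = r then z else x$l)::complex^'n) -` U)"]) auto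
  then have "eventually (\<lambda>z. g (\<chi> l. if l = r then z else x$l) = (\<lambda>_. 0) z) (nhds (x$r))"
    by eventually_elim (simp add: assms(3))
  then have "cpartial r g x = deriv (\<lambda>_. 0::complex) (x$r)"
    unfolding cpartial_def by (rule deriv_cong_ev) simp
  then show ?thesis by simp
qed



lemma sgnpow_add: "sgnpow (u + v) = sgnpow u * sgnpow v"
  unfolding sgnpow_def by (rule power_int_add) simp

lemma sgnpow_neg: "sgnpow (- u) = sgnpow u"
  unfolding sgnpow_def by (simp add: power_int_minus power_int_inverse[symmetric])

lemma ser_mult_comm: "ser_mult f g m x = ser_mult g f m x"
  unfolding ser_mult_def
  by (rule sum.reindex_bij_witness[where i="\<lambda>m1 r. m r - m1 r" and j="\<lambda>m1 r. m r - m1 r"])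
     (auto simp: mult.commute)

lemma mdeg_split: "(\<forall>r. m1 r \<le> m r) \<Longrightarrow> mdeg m1 + mdeg (\<lambda>r. m r - m1 r) = mdeg m"
  unfolding mdeg_def by (simp add: sum.distrib[symmetric])

lemma lenG_tri: "lenG (b + c) \<le> lenG b + lenG c"
proof -
  have "(\<Sum>l\<in>UNIV. \<bar>(b + c)$l\<bar>) \<le> (\<Sum>l\<in>UNIV. \<bar>b$l\<bar>) + (\<Sum>l\<in>UNIV. \<bar>c$l\<bar>)"
    by (simp add: sum.distrib[symmetric] sum_mono abs_triangle_ineq)
  moreover have "0 \<le> (\<Sum>l\<in>UNIV. \<bar>b$l\<bar>)" "0 \<le> (\<Sum>l\<in>UNIV. \<bar>c$l\<bar>)" by (auto intro: sum_nonneg)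
  ultimately show ?thesis unfolding lenG_def by linarith
qed

lemma Zc_add: "Zc (b + c) y = Zc b y + Zc c y"
  unfolding Zc_def by (simp add: sum.distrib[symmetric] algebra_simps)

lemma indep_int:
  assumes "lin_indep_R \<alpha>" "\<And>l. (\<Sum>k\<in>UNIV. c k * \<alpha> k $ l) = 0"
  shows "c k = 0"
proof -
  have "(\<Sum>k\<in>UNIV. real_of_int (c k) *\<^sub>R (\<chi> l. real_of_int (\<alpha> k $ l))) = 0"
  proof (subst vec_eq_iff, intro allI)
    fix l
    have "real_of_int (\<Sum>k\<in>UNIV. c k * \<alpha> k $ l) = 0" using assms(2) by simp
    then show "(\<Sum>k\<in>UNIV. real_of_int (c k) *\<^sub>R (\<chi> l. real_of_int (\<alpha> k $ l))) $ l = 0 $ l"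
      by simp
  qed
  then show ?thesis using assms(1) unfolding lin_indep_R_def by auto
qed

lemma alpha_inj:
  assumes "lin_indep_R \<alpha>" "k \<noteq> l" shows "\<alpha> k \<noteq> \<alpha> l"
proof
  assume h: "\<alpha> k = \<alpha> l"
  let ?c = "\<lambda>t. (if t = k then 1 else 0) - (if t = l then 1 else (0::int))"
  have hc: "\<And>q. (\<Sum>t\<in>UNIV. ?c t * \<alpha> t $ q) = 0"
    using h by (simp add: left_diff_distrib sum_subtractf if_distrib[of "\<lambda>x. x * _"] cong: if_cong)
  have "?c k = 0" by (rule indep_int[OF assms(1) hc])
  then show False using assms(2) by simp
qed

lemma alpha_pair:
  assumes "lin_indep_R \<alpha>" "i \<noteq> j" "k \<noteq> i" "k \<noteq> j" "k' \<noteq> i" "k' \<noteq> j"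
  shows "\<alpha> j - \<alpha> k \<noteq> \<alpha> k' - \<alpha> i"
proof
  assume h: "\<alpha> j - \<alpha> k = \<alpha> k' - \<alpha> i"
  let ?c = "\<lambda>t. (if t = j then 1 else 0) + (if t = i then 1 else 0) - (if t = k then 1 else 0) - (if t = k' then 1 else (0::int))"
  have hc: "\<And>q. (\<Sum>t\<in>UNIV. ?c t * \<alpha> t $ q) = 0"
  proof -
    fix q
    have "\<alpha> j $ q - \<alpha> k $ q = \<alpha> k' $ q - \<alpha> i $ q" using h by (metis vector_minus_component)
    then show "(\<Sum>t\<in>UNIV. ?c t * \<alpha> t $ q) = 0"
      by (simp add: left_diff_distrib distrib_right sum_subtractf sum.distrib if_distrib[of "\<lambda>x. x * _"] cong: if_cong)
  qed
  have "?c j = 0" by (rule indep_int[OF assms(1) hc])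
  then show False using assms by simp
qed



lemma Zc_cont: "continuous_on S (Zc a)"
  unfolding Zc_def by (intro continuous_intros)

lemma holo_cont: "holo_on U g \<Longrightarrow> continuous_on U g"
  unfolding holo_on_def
  by (meson continuous_at_imp_continuous_on has_derivative_continuous)

lemma Zc_shift:
  fixes x :: "complex^'n::finite"
  shows "Zc a (x + t *\<^sub>R axis l 1) = Zc a x + of_real t * of_int (a$l)"
proof -
  have "Zc a (x + t *\<^sub>R axis l 1) = Zc a x + (\<Sum>q\<in>UNIV. of_int (a$q) * (t *\<^sub>R (axis l 1 :: complex^'n)) $ q)"
    unfolding Zc_def by (simp add: sum.distrib[symmetric] algebra_simps)
  also have "(\<Sum>q\<in>UNIV. of_int (a$q) * (t *\<^sub>R (axis l 1 :: complex^'n)) $ q) = of_real t * of_int (a$l)"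
    by (simp add: axis_def if_distrib[of "\<lambda>x. _ * x"] cong: if_cong) (simp add: scaleR_conv_of_real sum_distrib_left[symmetric])
  finally show ?thesis .
qed

lemma dense_zero:
  fixes g :: "complex^'n::finite \<Rightarrow> complex" and a :: "int^'n"
  assumes U: "open U" "x \<in> U" and g: "continuous_on U g" and a: "a \<noteq> 0"
    and z: "\<And>z. z \<in> U \<Longrightarrow> Zc a z \<noteq> 0 \<Longrightarrow> g z = 0"
  shows "g x = 0"
proof (cases "Zc a x = 0")
  case False then show ?thesis using z U by blast
next
  case True
  obtain l where l: "a$l \<noteq> 0" using a by (metis vec_eq_iff zero_index)
  define y where "y = (\<lambda>n. x + inverse (real (Suc n)) *\<^sub>R (axis l 1 :: complex^'n))"
  have y: "y \<longlonglongrightarrow> x"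
  proof -
    have "(\<lambda>n. x + inverse (real (Suc n)) *\<^sub>R (axis l 1 :: complex^'n)) \<longlonglongrightarrow> x + 0 *\<^sub>R axis l 1"
      by (intro tendsto_intros LIMSEQ_inverse_real_of_nat)
    then show ?thesis by (simp add: y_def)
  qed
  have ev: "eventually (\<lambda>n. y n \<in> U) sequentially"
    using y U by (simp add: topological_tendstoD)
  have "isCont g x" using g U continuous_on_eq_continuous_at by blast
  then have gy: "(\<lambda>n. g (y n)) \<longlonglongrightarrow> g x" using y isCont_tendsto_compose by blast
  have "eventually (\<lambda>n. g (y n) = 0) sequentially"
    using ev
  proof eventually_elim
    case (elim n)
    have "Zc a (y n) = of_real (inverse (real (Suc n))) * of_int (a$l)"
      using True by (simp add: y_def Zc_shift)
    moreover have "(1::complex) + of_nat n \<noteq> 0" by (metis of_nat_Suc of_nat_eq_0_iff Zero_not_Suc)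
    ultimately have "Zc a (y n) \<noteq> 0" using l by simp
    then show ?case using z elim by blast
  qed
  then have "(\<lambda>n. g (y n)) \<longlonglongrightarrow> 0" by (rule tendsto_eventually)
  then show ?thesis using gy LIMSEQ_unique by blast
qed


lemma key_alg0:
  fixes c ee q M br bs gr gs u v w :: complex
  assumes "w * (u + v) = u * v"
  shows "c * (-( ee * q * M * (br * u) + ee * (-q) * M * (gr * v)) * ((bs+gs) * w) + (ee * q * M * (bs * u) + ee * (-q) * M * (gs * v)) * ((br+gr) * w)) + c * ee * q * M * ((br * u) * (gs * v) - (bs * u) * (gr * v)) = 0"
proof -
  have "c * (-( ee * q * M * (br * u) + ee * (-q) * M * (gr * v)) * ((bs+gs) * w) + (ee * q * M * (bs * u) + ee * (-q) * M * (gs * v)) * ((br+gr) * w)) + c * ee * q * M * ((br * u) * (gs * v) - (bs * u) * (gr * v))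
     = c * ee * q * M * (bs * gr - br * gs) * (w * (u + v) - u * v)"
    by (simp add: algebra_simps)
  then show ?thesis using assms by simp
qed

lemma key_alg:
  fixes c ee q M br bs gr gs Zb Zg K :: complex
  assumes "Zb \<noteq> 0" "Zg \<noteq> 0" "Zb + Zg \<noteq> 0" "c * ee * q = K"
  shows "c * (-( ee * q * M * (br/Zb) + ee * (-q) * M * (gr/Zg)) * ((bs+gs)/(Zb+Zg)) + (ee * q * M * (bs/Zb) + ee * (-q) * M * (gs/Zg)) * ((br+gr)/(Zb+Zg))) + K * M * ((br/Zb) * (gs/Zg) - (bs/Zb) * (gr/Zg)) = 0"
proof -
  have h: "(1/(Zb+Zg)) * (1/Zb + 1/Zg) = 1/Zb * (1/Zg)" using assms(1-3) by (simp add: field_simps)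
  from key_alg0[OF h, of c ee q M br gr bs gs] show ?thesis
    unfolding assms(4)[symmetric] by (simp only: divide_inverse mult_1_left)
qed


lemma not_nz: "\<not> ser_nonzero U g \<Longrightarrow> z \<in> U \<Longrightarrow> g m z = 0"
  unfolding ser_nonzero_def by blast

lemma Amat_diag: "Amat bf U f \<alpha> k k = (\<lambda>m r x. 0)"
  unfolding Amat_def by simp

lemma Amat_cont:
  assumes f_in_R: "\<forall>a. a \<noteq> 0 \<longrightarrow> (\<forall>m. holo_on U (f a m))"
    and f_Z: "\<forall>a. a \<noteq> 0 \<longrightarrow> ser_nonzero U (f a) \<longrightarrow> (\<forall>x\<in>U. Zc a x \<noteq> 0)"
    and indep: "lin_indep_R \<alpha>"
  shows "continuous_on U (Amat bf U f \<alpha> k l m r)"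
proof (cases "k = l \<or> \<not> ser_nonzero U (f (\<alpha> k - \<alpha> l))")
  case True then show ?thesis unfolding Amat_def by (auto intro: continuous_on_const)
next
  case False
  then have a: "\<alpha> k - \<alpha> l \<noteq> 0" using alpha_inj[OF indep] by auto
  have Z: "\<forall>x\<in>U. Zc (\<alpha> k - \<alpha> l) x \<noteq> 0" using f_Z a False by blast
  have h: "continuous_on U (f (\<alpha> k - \<alpha> l) m)" using f_in_R a holo_cont by blast
  have "continuous_on U (\<lambda>x. sgnpow (bf (\<alpha> k) (\<alpha> l)) * of_int (bf (\<alpha> k) (\<alpha> l))
          * f (\<alpha> k - \<alpha> l) m x * dlogZ (\<alpha> k - \<alpha> l) r x)"
    unfolding dlogZ_def using Z h by (intro continuous_intros Zc_cont) auto
  then show ?thesis using False unfolding Amat_def by simp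
qed

lemma curv_rest_cont:
  assumes f_in_R: "\<forall>a. a \<noteq> 0 \<longrightarrow> (\<forall>m. holo_on U (f a m))"
    and f_Z: "\<forall>a. a \<noteq> 0 \<longrightarrow> ser_nonzero U (f a) \<longrightarrow> (\<forall>x\<in>U. Zc a x \<noteq> 0)"
    and indep: "lin_indep_R \<alpha>"
  shows "continuous_on U (\<lambda>x. \<Sum>q\<in>UNIV. wedge (Amat bf U f \<alpha> j q) (Amat bf U f \<alpha> q i) m r s x)"
  unfolding wedge_def
  by (intro continuous_intros Amat_cont[OF assms])

definition pterm where
  "pterm bf f a m y t b = sgnpow (bf b (a - b)) * of_int (bf b (a - b)) * ser_mult (f b) (f (a - b)) m y * dlogZ b t y"

lemma ext_formula:
  assumes U_open: "open U"
    and f_in_R: "\<forall>a. a \<noteq> 0 \<longrightarrow> (\<forall>m. holo_on U (f a m))"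
    and f_Z: "\<forall>a. a \<noteq> 0 \<longrightarrow> ser_nonzero U (f a) \<longrightarrow> (\<forall>x\<in>U. Zc a x \<noteq> 0)"
    and indep: "lin_indep_R \<alpha>" and ij: "i \<noteq> j" and y: "y \<in> U"
  shows "ext_d (Amat bf U f \<alpha> j i) m r s y =
     sgnpow (bf (\<alpha> j) (\<alpha> i)) * of_int (bf (\<alpha> j) (\<alpha> i)) *
      (cpartial r (f (\<alpha> j - \<alpha> i) m) y * dlogZ (\<alpha> j - \<alpha> i) s y
       - cpartial s (f (\<alpha> j - \<alpha> i) m) y * dlogZ (\<alpha> j - \<alpha> i) r y)"
proof (cases "ser_nonzero U (f (\<alpha> j - \<alpha> i))")
  case True
  let ?a = "\<alpha> j - \<alpha> i"
  let ?c = "sgnpow (bf (\<alpha> j) (\<alpha> i)) * of_int (bf (\<alpha> j) (\<alpha> i))"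
  have a: "?a \<noteq> 0" using alpha_inj[OF indep] ij by auto
  have Z: "Zc ?a y \<noteq> 0" using f_Z a True y by blast
  have h: "holo_on U (f ?a m)" using f_in_R a by blast
  have A: "\<And>t. Amat bf U f \<alpha> j i m t = (\<lambda>x. ?c * f ?a m x * dlogZ ?a t x)"
    using True ij unfolding Amat_def by auto
  show ?thesis
    unfolding ext_d_def A cpartial_prod[OF h y Z] by (simp add: algebra_simps)
next
  case False
  have A: "\<And>t. Amat bf U f \<alpha> j i m t = (\<lambda>x. 0)"
    using False unfolding Amat_def by auto
  have P: "\<And>t. cpartial t (f (\<alpha> j - \<alpha> i) m) y = 0"
    by (rule cpartial_zero[OF U_open y]) (rule not_nz[OF False])
  show ?thesis unfolding ext_d_def A P by (simp add: cpartial_def)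
qed


lemma P_formula:
  assumes pde: "joyce_pde bf U f" and indep: "lin_indep_R \<alpha>" and ij: "i \<noteq> j"
    and y: "y \<in> U" and mp: "mdeg m < p"
    and V: "\<forall>b c. b \<noteq> 0 \<longrightarrow> c \<noteq> 0 \<longrightarrow> b + c = \<alpha> j - \<alpha> i \<longrightarrow>
          \<not> (\<exists>k. k \<noteq> i \<and> k \<noteq> j \<and>
                 ((b, c) = (\<alpha> j - \<alpha> k, \<alpha> k - \<alpha> i) \<or>
                  (b, c) = (\<alpha> k - \<alpha> i, \<alpha> j - \<alpha> k))) \<longrightarrow>
          in_sp U p (\<lambda>m x. of_int (bf b c) * ser_mult (f b) (f c) m x)"
  shows "cpartial t (f (\<alpha> j - \<alpha> i) m) y = - (\<Sum>k\<in>UNIV-{i,j}.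
      pterm bf f (\<alpha> j - \<alpha> i) m y t (\<alpha> j - \<alpha> k) + pterm bf f (\<alpha> j - \<alpha> i) m y t (\<alpha> k - \<alpha> i))"
proof -
  define a where "a = \<alpha> j - \<alpha> i"
  define K where "K = (UNIV::'a set) - {i,j}"
  define S1 where "S1 = (\<lambda>k. \<alpha> j - \<alpha> k) ` K"
  define S2 where "S2 = (\<lambda>k. \<alpha> k - \<alpha> i) ` K"
  define B where "B = {b. b \<noteq> 0 \<and> a - b \<noteq> 0}"
  have a0: "a \<noteq> 0" using alpha_inj[OF indep] ij by (auto simp: a_def)
  have inj: "\<And>k l. \<alpha> k = \<alpha> l \<Longrightarrow> k = l" using alpha_inj[OF indep] by blast
  have "cpartial t (f a m) y = - infsum (pterm bf f a m y t) B"
    using pde a0 y unfolding joyce_pde_def pterm_def B_def by blast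
  also have "infsum (pterm bf f a m y t) B = infsum (pterm bf f a m y t) (S1 \<union> S2)"
  proof (rule infsum_cong_neutral)
    fix b assume "b \<in> (S1 \<union> S2) - B"
    then show "pterm bf f a m y t b = 0"
      using inj by (auto simp: S1_def S2_def K_def B_def a_def)
  next
    fix b assume b: "b \<in> B - (S1 \<union> S2)"
    have "in_sp U p (\<lambda>m x. of_int (bf b (a - b)) * ser_mult (f b) (f (a - b)) m x)"
    proof (rule V[rule_format])
      show "b \<noteq> 0" "a - b \<noteq> 0" using b by (auto simp: B_def)
      show "b + (a - b) = \<alpha> j - \<alpha> i" by (simp add: a_def)
      show "\<not> (\<exists>k. k \<noteq> i \<and> k \<noteq> j \<and> ((b, a - b) = (\<alpha> j - \<alpha> k, \<alpha> k - \<alpha> i) \<or>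
                 (b, a - b) = (\<alpha> k - \<alpha> i, \<alpha> j - \<alpha> k)))"
        using b by (auto simp: S1_def S2_def K_def)
    qed
    then have "of_int (bf b (a - b)) * ser_mult (f b) (f (a - b)) m y = 0"
      using mp y unfolding in_sp_def by blast
    then show "pterm bf f a m y t b = 0" unfolding pterm_def by auto
  qed auto
  also have "\<dots> = sum (pterm bf f a m y t) (S1 \<union> S2)"
    by (simp add: S1_def S2_def)
  also have "\<dots> = sum (pterm bf f a m y t) S1 + sum (pterm bf f a m y t) S2"
  proof (rule sum.union_disjoint)
    show "finite S1" "finite S2" by (auto simp: S1_def S2_def)
    show "S1 \<inter> S2 = {}" using alpha_pair[OF indep ij] by (auto simp: S1_def S2_def K_def)
  qed
  also have "sum (pterm bf f a m y t) S1 = (\<Sum>k\<in>K. pterm bf f a m y t (\<alpha> j - \<alpha> k))"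
    unfolding S1_def by (rule sum.reindex_cong[where l="\<lambda>k. \<alpha> j - \<alpha> k"]) (auto simp: inj_on_def intro: inj)
  also have "sum (pterm bf f a m y t) S2 = (\<Sum>k\<in>K. pterm bf f a m y t (\<alpha> k - \<alpha> i))"
    unfolding S2_def by (rule sum.reindex_cong[where l="\<lambda>k. \<alpha> k - \<alpha> i"]) (auto simp: inj_on_def intro: inj)
  finally show ?thesis by (simp add: a_def K_def sum.distrib)
qed


lemma wedge_red:
  "(\<Sum>q\<in>UNIV. wedge (Amat bf U f \<alpha> j q) (Amat bf U f \<alpha> q i) m r s y)
   = (\<Sum>k\<in>UNIV-{i,j}. wedge (Amat bf U f \<alpha> j k) (Amat bf U f \<alpha> k i) m r s y)"
  by (rule sum.mono_neutral_right) (auto simp: wedge_def Amat_diag)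

lemma bf_rules:
  assumes "skew_bilinear bf"
  shows "bf (x - y) z = bf x z - bf y z" "bf z (x - y) = bf z x - bf z y" "bf x x = 0"
    "bf y x = - bf x y"
proof -
  have L: "\<And>a b c. bf (a + b) c = bf a c + bf b c" and R: "\<And>a b c. bf a (b + c) = bf a b + bf a c"
    and S: "\<And>a b. bf a b = - bf b a" using assms unfolding skew_bilinear_def by blast+
  show "bf (x - y) z = bf x z - bf y z" using L[of "x - y" y z] by simp
  show "bf z (x - y) = bf z x - bf z y" using R[of z "x - y" y] by simp
  have "bf x x = - bf x x" by (rule S)
  then show "bf x x = 0" by simp
  show "bf y x = - bf x y" by (rule S)
qed

lemma perk:
  assumes form: "skew_bilinear bf"
    and f_Z: "\<forall>a. a \<noteq> 0 \<longrightarrow> ser_nonzero U (f a) \<longrightarrow> (\<forall>x\<in>U. Zc a x \<noteq> 0)"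
    and indep: "lin_indep_R \<alpha>" and ij: "i \<noteq> j" and ki: "k \<noteq> i" and kj: "k \<noteq> j"
    and Qk: "bf (\<alpha> j) (\<alpha> i) * bf (\<alpha> j - \<alpha> k) (\<alpha> k - \<alpha> i) = bf (\<alpha> j) (\<alpha> k) * bf (\<alpha> k) (\<alpha> i)"
    and y: "y \<in> U" and Za: "Zc (\<alpha> j - \<alpha> i) y \<noteq> 0"
  shows "sgnpow (bf (\<alpha> j) (\<alpha> i)) * of_int (bf (\<alpha> j) (\<alpha> i)) *
     (-(pterm bf f (\<alpha> j - \<alpha> i) m y r (\<alpha> j - \<alpha> k) + pterm bf f (\<alpha> j - \<alpha> i) m y r (\<alpha> k - \<alpha> i)) * dlogZ (\<alpha> j - \<alpha> i) s y
      + (pterm bf f (\<alpha> j - \<alpha> i) m y s (\<alpha> j - \<alpha> k) + pterm bf f (\<alpha> j - \<alpha> i) m y s (\<alpha> k - \<alpha> i)) * dlogZ (\<alpha> j - \<alpha> i) r y)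
     + wedge (Amat bf U f \<alpha> j k) (Amat bf U f \<alpha> k i) m r s y = 0"
proof -
  define a where "a = \<alpha> j - \<alpha> i"
  define \<beta> where "\<beta> = \<alpha> j - \<alpha> k"
  define \<gamma> where "\<gamma> = \<alpha> k - \<alpha> i"
  have ab: "a - \<beta> = \<gamma>" "a - \<gamma> = \<beta>" "a = \<beta> + \<gamma>" by (simp_all add: a_def \<beta>_def \<gamma>_def)
  have sk: "bf \<gamma> \<beta> = - bf \<beta> \<gamma>" by (rule bf_rules(4)[OF form])
  note defs = a_def[symmetric] \<beta>_def[symmetric] \<gamma>_def[symmetric]
  show ?thesis
  proof (cases "ser_nonzero U (f \<beta>) \<and> ser_nonzero U (f \<gamma>)")
    case False
    have M0: "ser_mult (f \<beta>) (f \<gamma>) m y = 0" "ser_mult (f \<gamma>) (f \<beta>) m y = 0"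
      using False not_nz[OF _ y] unfolding ser_mult_def by (auto intro!: sum.neutral)
    have W0: "wedge (Amat bf U f \<alpha> j k) (Amat bf U f \<alpha> k i) m r s y = 0"
      using False unfolding wedge_def Amat_def defs by auto
    show ?thesis unfolding defs W0 by (simp add: pterm_def ab M0)
  next
    case True
    have b0: "\<beta> \<noteq> 0" "\<gamma> \<noteq> 0" using alpha_inj[OF indep] ki kj by (auto simp: \<beta>_def \<gamma>_def)
    have Zb: "Zc \<beta> y \<noteq> 0" "Zc \<gamma> y \<noteq> 0" using f_Z b0 True y by blast+
    define M where "M = ser_mult (f \<beta>) (f \<gamma>) m y"
    define q where "q = bf \<beta> \<gamma>"
    have PB: "\<And>t. pterm bf f a m y t \<beta> = sgnpow q * of_int q * M * (of_int (\<beta>$t) / Zc \<beta> y)"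
      by (simp add: pterm_def ab M_def q_def dlogZ_def)
    have PG: "\<And>t. pterm bf f a m y t \<gamma> = sgnpow q * (- of_int q) * M * (of_int (\<gamma>$t) / Zc \<gamma> y)"
      by (simp add: pterm_def ab M_def q_def dlogZ_def sk sgnpow_neg ser_mult_comm[of "f \<gamma>"])
    have DA: "\<And>t. dlogZ a t y = (of_int (\<beta>$t) + of_int (\<gamma>$t)) / (Zc \<beta> y + Zc \<gamma> y)"
      by (simp add: dlogZ_def ab(3) Zc_add)
    have Za': "Zc \<beta> y + Zc \<gamma> y \<noteq> 0" using Za by (simp add: defs ab(3) Zc_add)
    define cjk where "cjk = sgnpow (bf (\<alpha> j) (\<alpha> k)) * of_int (bf (\<alpha> j) (\<alpha> k))"
    define cki where "cki = sgnpow (bf (\<alpha> k) (\<alpha> i)) * of_int (bf (\<alpha> k) (\<alpha> i))"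
    have Ajk: "\<And>m' t. Amat bf U f \<alpha> j k m' t = (\<lambda>x. cjk * f \<beta> m' x * dlogZ \<beta> t x)"
      using True kj unfolding Amat_def cjk_def defs by auto
    have Aki: "\<And>m' t. Amat bf U f \<alpha> k i m' t = (\<lambda>x. cki * f \<gamma> m' x * dlogZ \<gamma> t x)"
      using True ki unfolding Amat_def cki_def defs by auto
    have W: "wedge (Amat bf U f \<alpha> j k) (Amat bf U f \<alpha> k i) m r s y =
       (cjk * cki) * M * ((of_int (\<beta>$r) / Zc \<beta> y) * (of_int (\<gamma>$s) / Zc \<gamma> y)
                          - (of_int (\<beta>$s) / Zc \<beta> y) * (of_int (\<gamma>$r) / Zc \<gamma> y))"
      unfolding wedge_def Ajk Aki M_def ser_mult_def sum_distrib_right sum_distrib_left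
      by (rule sum.cong) (auto simp: dlogZ_def algebra_simps)
    have K: "sgnpow (bf (\<alpha> j) (\<alpha> i)) * of_int (bf (\<alpha> j) (\<alpha> i)) * sgnpow q * of_int q = cjk * cki"
    proof -
      have qe: "q = bf (\<alpha> j) (\<alpha> k) - bf (\<alpha> j) (\<alpha> i) + bf (\<alpha> k) (\<alpha> i)"
        unfolding q_def \<beta>_def \<gamma>_def using bf_rules(1-3)[OF form] by simp
      have s: "sgnpow (bf (\<alpha> j) (\<alpha> i)) * sgnpow q = sgnpow (bf (\<alpha> j) (\<alpha> k)) * sgnpow (bf (\<alpha> k) (\<alpha> i))"
        unfolding sgnpow_add[symmetric] qe by simp
      have p: "of_int (bf (\<alpha> j) (\<alpha> i)) * of_int q = (of_int (bf (\<alpha> j) (\<alpha> k)) * of_int (bf (\<alpha> k) (\<alpha> i)) :: complex)"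
        using Qk unfolding q_def \<beta>_def \<gamma>_def by (metis of_int_mult)
      show ?thesis unfolding cjk_def cki_def using s p
        by (metis (no_types, lifting) mult.assoc mult.left_commute)
    qed
    show ?thesis
      unfolding defs W PB PG DA
      using key_alg[OF Zb Za' K, of M "of_int (\<beta>$r)" "of_int (\<gamma>$r)" "of_int (\<beta>$s)" "of_int (\<gamma>$s)"]
      by simp
  qed
qed



lemma Amat_low:
  assumes f_len: "\<forall>a. a \<noteq> 0 \<longrightarrow> in_sp U (lenG a) (f a)" and indep: "lin_indep_R \<alpha>"
    and z: "z \<in> U" and md: "mdeg m' < lenG (\<alpha> k - \<alpha> l)"
  shows "Amat bf U f \<alpha> k l m' t z = 0"
proof (cases "k = l")
  case True then show ?thesis by (simp add: Amat_diag)
next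
  case False
  then have "\<alpha> k - \<alpha> l \<noteq> 0" using alpha_inj[OF indep] by auto
  then have "f (\<alpha> k - \<alpha> l) m' z = 0" using f_len z md unfolding in_sp_def by blast
  then show ?thesis unfolding Amat_def by simp
qed

lemma branch1:
  assumes U_open: "open U"
    and f_len: "\<forall>a. a \<noteq> 0 \<longrightarrow> in_sp U (lenG a) (f a)" and indep: "lin_indep_R \<alpha>"
    and ij: "i \<noteq> j" and x: "x \<in> U" and mp: "mdeg m < p" and len: "p \<le> lenG (\<alpha> j - \<alpha> i)"
  shows "curv bf U f \<alpha> j i m r s x = 0"
proof -
  have E: "ext_d (Amat bf U f \<alpha> j i) m r s x = 0"
    unfolding ext_d_def
    using cpartial_zero[OF U_open x, of "Amat bf U f \<alpha> j i m s" r]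
          cpartial_zero[OF U_open x, of "Amat bf U f \<alpha> j i m r" s]
          Amat_low[OF f_len indep] mp len by auto
  have W: "wedge (Amat bf U f \<alpha> j q) (Amat bf U f \<alpha> q i) m r s x = 0" for q
    unfolding wedge_def
  proof (rule sum.neutral, intro ballI)
    fix m1 assume "m1 \<in> {m1. \<forall>r. m1 r \<le> m r}"
    then have d: "mdeg m1 + mdeg (\<lambda>r. m r - m1 r) = mdeg m" by (simp add: mdeg_split)
    have "lenG (\<alpha> j - \<alpha> i) \<le> lenG (\<alpha> j - \<alpha> q) + lenG (\<alpha> q - \<alpha> i)"
      using lenG_tri[of "\<alpha> j - \<alpha> q" "\<alpha> q - \<alpha> i"] by simp
    then have "mdeg m1 < lenG (\<alpha> j - \<alpha> q) \<or> mdeg (\<lambda>r. m r - m1 r) < lenG (\<alpha> q - \<alpha> i)"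
      using d mp len by linarith
    then show "Amat bf U f \<alpha> j q m1 r x * Amat bf U f \<alpha> q i (\<lambda>ra. m ra - m1 ra) s x -
         Amat bf U f \<alpha> j q m1 s x * Amat bf U f \<alpha> q i (\<lambda>ra. m ra - m1 ra) r x = 0"
      using Amat_low[OF f_len indep x] by auto
  qed
  show ?thesis unfolding curv_def E W by simp
qed



lemma pointwise2:
  assumes form: "skew_bilinear bf"
    and U_open: "open U"
    and f_in_R: "\<forall>a. a \<noteq> 0 \<longrightarrow> (\<forall>m. holo_on U (f a m))"
    and f_Z: "\<forall>a. a \<noteq> 0 \<longrightarrow> ser_nonzero U (f a) \<longrightarrow> (\<forall>x\<in>U. Zc a x \<noteq> 0)"
    and pde: "joyce_pde bf U f"
    and indep: "lin_indep_R \<alpha>"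
    and ij: "i \<noteq> j"
    and Q: "\<forall>k. k \<noteq> i \<and> k \<noteq> j \<longrightarrow>
          bf (\<alpha> j) (\<alpha> i) * bf (\<alpha> j - \<alpha> k) (\<alpha> k - \<alpha> i)
            = bf (\<alpha> j) (\<alpha> k) * bf (\<alpha> k) (\<alpha> i)"
    and V: "\<forall>b c. b \<noteq> 0 \<longrightarrow> c \<noteq> 0 \<longrightarrow> b + c = \<alpha> j - \<alpha> i \<longrightarrow>
          \<not> (\<exists>k. k \<noteq> i \<and> k \<noteq> j \<and>
                 ((b, c) = (\<alpha> j - \<alpha> k, \<alpha> k - \<alpha> i) \<or>
                  (b, c) = (\<alpha> k - \<alpha> i, \<alpha> j - \<alpha> k))) \<longrightarrow>
          in_sp U p (\<lambda>m x. of_int (bf b c) * ser_mult (f b) (f c) m x)"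
    and y: "y \<in> U" and Za: "Zc (\<alpha> j - \<alpha> i) y \<noteq> 0" and mp: "mdeg m < p"
  shows "curv bf U f \<alpha> j i m r s y = 0"
proof -
  let ?c = "sgnpow (bf (\<alpha> j) (\<alpha> i)) * of_int (bf (\<alpha> j) (\<alpha> i))"
  let ?X = "\<lambda>k t. pterm bf f (\<alpha> j - \<alpha> i) m y t (\<alpha> j - \<alpha> k) + pterm bf f (\<alpha> j - \<alpha> i) m y t (\<alpha> k - \<alpha> i)"
  let ?w = "\<lambda>t. dlogZ (\<alpha> j - \<alpha> i) t y"
  let ?W = "\<lambda>k. wedge (Amat bf U f \<alpha> j k) (Amat bf U f \<alpha> k i) m r s y"
  let ?K = "UNIV - {i, j}"
  have P: "\<And>t. cpartial t (f (\<alpha> j - \<alpha> i) m) y = - (\<Sum>k\<in>?K. ?X k t)"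
    by (rule P_formula[OF pde indep ij y mp V])
  have "curv bf U f \<alpha> j i m r s y = ?c * ((- (\<Sum>k\<in>?K. ?X k r)) * ?w s - (- (\<Sum>k\<in>?K. ?X k s)) * ?w r)
        + (\<Sum>k\<in>?K. ?W k)"
    unfolding curv_def ext_formula[OF U_open f_in_R f_Z indep ij y] wedge_red P by simp
  also have "\<dots> = (\<Sum>k\<in>?K. ?c * (- ?X k r * ?w s + ?X k s * ?w r) + ?W k)"
  proof -
    have "(\<Sum>k\<in>?K. ?c * (- ?X k r * ?w s + ?X k s * ?w r) + ?W k)
        = ?c * ((\<Sum>k\<in>?K. - ?X k r * ?w s) + (\<Sum>k\<in>?K. ?X k s * ?w r)) + (\<Sum>k\<in>?K. ?W k)"
      by (simp only: sum.distrib[symmetric] sum_distrib_left)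
    also have "\<dots> = ?c * ((- (\<Sum>k\<in>?K. ?X k r)) * ?w s - (- (\<Sum>k\<in>?K. ?X k s)) * ?w r) + (\<Sum>k\<in>?K. ?W k)"
      by (simp only: sum_distrib_right[symmetric] sum_negf) simp
    finally show ?thesis by simp
  qed
  also have "\<dots> = 0"
  proof (rule sum.neutral, intro ballI)
    fix k assume "k \<in> ?K"
    then have k: "k \<noteq> i" "k \<noteq> j" by auto
    show "?c * (- ?X k r * ?w s + ?X k s * ?w r) + ?W k = 0"
      using perk[OF form f_Z indep ij k Q[rule_format, OF conjI[OF k]] y Za, of m r s] by simp
  qed
  finally show ?thesis .
qed

theorem lemma3p6:
  fixes bf :: "int^('n::finite) \<Rightarrow> int^'n \<Rightarrow> int"
    and U :: "(complex^'n) set"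
    and f :: "int^'n \<Rightarrow> 'n ser"
    and \<alpha> :: "'n \<Rightarrow> int^'n"
    and i j :: 'n
    and p :: nat
  assumes form: "skew_bilinear bf"
    and U_open: "open U" and U_conn: "connected U"
    and f_in_R: "\<forall>a. a \<noteq> 0 \<longrightarrow> (\<forall>m. holo_on U (f a m))"
    and f_len: "\<forall>a. a \<noteq> 0 \<longrightarrow> in_sp U (lenG a) (f a)"
    and f_Z: "\<forall>a. a \<noteq> 0 \<longrightarrow> ser_nonzero U (f a) \<longrightarrow> (\<forall>x\<in>U. Zc a x \<noteq> 0)"
    and pde: "joyce_pde bf U f"
    and indep: "lin_indep_R \<alpha>"
    and ij: "i \<noteq> j"
    and p3: "3 \<le> p"
    and hyp: "p \<le> lenG (\<alpha> j - \<alpha> i) \<or>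
      ((\<forall>k. k \<noteq> i \<and> k \<noteq> j \<longrightarrow>
          bf (\<alpha> j) (\<alpha> i) * bf (\<alpha> j - \<alpha> k) (\<alpha> k - \<alpha> i)
            = bf (\<alpha> j) (\<alpha> k) * bf (\<alpha> k) (\<alpha> i)) \<and>
       (\<forall>b c. b \<noteq> 0 \<longrightarrow> c \<noteq> 0 \<longrightarrow> b + c = \<alpha> j - \<alpha> i \<longrightarrow>
          \<not> (\<exists>k. k \<noteq> i \<and> k \<noteq> j \<and>
                 ((b, c) = (\<alpha> j - \<alpha> k, \<alpha> k - \<alpha> i) \<or>
                  (b, c) = (\<alpha> k - \<alpha> i, \<alpha> j - \<alpha> k))) \<longrightarrow>
          in_sp U p (\<lambda>m x. of_int (bf b c) * ser_mult (f b) (f c) m x)))"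
  shows "in_sp2 U p (curv bf U f \<alpha> j i)"
  unfolding in_sp2_def
proof (intro allI impI ballI)
  fix m :: "'n mono" and r s :: 'n and x assume mp: "mdeg m < p" and x: "x \<in> U"
  show "curv bf U f \<alpha> j i m r s x = 0"
  proof (cases "p \<le> lenG (\<alpha> j - \<alpha> i)")
    case True
    then show ?thesis by (rule branch1[OF U_open f_len indep ij x mp])
  next
    case False
    with hyp have Q: "\<forall>k. k \<noteq> i \<and> k \<noteq> j \<longrightarrow>
          bf (\<alpha> j) (\<alpha> i) * bf (\<alpha> j - \<alpha> k) (\<alpha> k - \<alpha> i)
            = bf (\<alpha> j) (\<alpha> k) * bf (\<alpha> k) (\<alpha> i)"
      and V: "\<forall>b c. b \<noteq> 0 \<longrightarrow> c \<noteq> 0 \<longrightarrow> b + c = \<alpha> j - \<alpha> i \<longrightarrow>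
          \<not> (\<exists>k. k \<noteq> i \<and> k \<noteq> j \<and>
                 ((b, c) = (\<alpha> j - \<alpha> k, \<alpha> k - \<alpha> i) \<or>
                  (b, c) = (\<alpha> k - \<alpha> i, \<alpha> j - \<alpha> k))) \<longrightarrow>
          in_sp U p (\<lambda>m x. of_int (bf b c) * ser_mult (f b) (f c) m x)" by auto
    note pw = pointwise2[OF form U_open f_in_R f_Z pde indep ij Q V _ _ mp]
    have a0: "\<alpha> j - \<alpha> i \<noteq> 0" using alpha_inj[OF indep] ij by auto
    show ?thesis
    proof (cases "ser_nonzero U (f (\<alpha> j - \<alpha> i))")
      case True
      then have "Zc (\<alpha> j - \<alpha> i) x \<noteq> 0" using f_Z a0 x by blast
      then show ?thesis using pw x by blast
    next
      case False
      have A0: "Amat bf U f \<alpha> j i = (\<lambda>m r x. 0)"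
        using False unfolding Amat_def by (intro ext) auto
      have eq: "\<And>z. curv bf U f \<alpha> j i m r s z =
          (\<Sum>q\<in>UNIV. wedge (Amat bf U f \<alpha> j q) (Amat bf U f \<alpha> q i) m r s z)"
        unfolding curv_def A0 by (simp add: ext_d_def cpartial_def)
      have "(\<Sum>q\<in>UNIV. wedge (Amat bf U f \<alpha> j q) (Amat bf U f \<alpha> q i) m r s x) = 0"
      proof (rule dense_zero[OF U_open x curv_rest_cont[OF f_in_R f_Z indep] a0])
        fix z assume "z \<in> U" "Zc (\<alpha> j - \<alpha> i) z \<noteq> 0"
        then show "(\<Sum>q\<in>UNIV. wedge (Amat bf U f \<alpha> j q) (Amat bf U f \<alpha> q i) m r s z) = 0"
          using pw[of z] eq[of z] by simp
      qed
      then show ?thesis using eq by simp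
    qed
  qed
qed


end
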